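(* Let $l$ be a positive integer, let $G$ be an arbitrary graph and let $H$ be an $l$-degenerate graph. If $l\in\{1,2\}$, then $G+_S H$ is $2$-degenerate; if $l\ge 3$, then $G+_S H$ is $l$-degenerate.
   Context: A graph is $k$-degenerate if its vertices can be successively deleted so that each deleted vertex has degree at most $k$ (in the remaining graph) at the time of deletion. The subdivision graph $S(G)$ is obtained from $G$ by inserting one new vertex into each edge (each edge replaced by a path of length 2); its vertex set is identified with $V(G)\cup E(G)$. The $S$-sum $G+_S H$ has vertex set $(V(G)\cup E(G))\times V(H)$, and $(u_1,u_2)$, $(v_1,v_2)$ are adjacent iff either [$u_1=v_1\in V(G)$ and $u_2v_2\in E(H)$] or [$u_2=v_2$ and $u_1v_1\in E(S(G))$]. *)

theory Defs
  imports Main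
begin

definition simple_graph :: "'a set \<Rightarrow> 'a set set \<Rightarrow> bool" where
  "simple_graph V E \<longleftrightarrow> finite V \<and>
     (\<forall>e\<in>E. \<exists>u v. e = {u, v} \<and> u \<noteq> v \<and> u \<in> V \<and> v \<in> V)"

definition deg_in :: "'a set set \<Rightarrow> 'a set \<Rightarrow> 'a \<Rightarrow> nat" where
  "deg_in E W v = card {u \<in> W. {u, v} \<in> E}"

definition degenerate :: "'a set \<Rightarrow> 'a set set \<Rightarrow> nat \<Rightarrow> bool" where
  "degenerate V E k \<longleftrightarrow> (\<exists>xs. distinct xs \<and> set xs = V \<and>
     (\<forall>i < length xs. deg_in E (set (drop i xs)) (xs ! i) \<le> k))"

definition subdiv_vertices :: "'a set \<Rightarrow> 'a set set \<Rightarrow> ('a + 'a set) set" where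
  "subdiv_vertices V E = Inl ` V \<union> Inr ` E"

definition subdiv_edges :: "'a set set \<Rightarrow> ('a + 'a set) set set" where
  "subdiv_edges E = {{Inl v, Inr e} | v e. e \<in> E \<and> v \<in> e}"

definition S_sum_vertices :: "'a set \<Rightarrow> 'a set set \<Rightarrow> 'b set \<Rightarrow> (('a + 'a set) \<times> 'b) set" where
  "S_sum_vertices VG EG VH = subdiv_vertices VG EG \<times> VH"

definition S_sum_adj :: "'a set \<Rightarrow> 'a set set \<Rightarrow> 'b set set \<Rightarrow>
    ('a + 'a set) \<times> 'b \<Rightarrow> ('a + 'a set) \<times> 'b \<Rightarrow> bool" where
  "S_sum_adj VG EG EH x y \<longleftrightarrow>
     (fst x = fst y \<and> fst x \<in> Inl ` VG \<and> {snd x, snd y} \<in> EH) \<or>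
     (snd x = snd y \<and> {fst x, fst y} \<in> subdiv_edges EG)"

definition S_sum_edges :: "'a set \<Rightarrow> 'a set set \<Rightarrow> 'b set \<Rightarrow> 'b set set \<Rightarrow>
    (('a + 'a set) \<times> 'b) set set" where
  "S_sum_edges VG EG VH EH = {{x, y} | x y. x \<in> S_sum_vertices VG EG VH \<and>
      y \<in> S_sum_vertices VG EG VH \<and> S_sum_adj VG EG EH x y}"

end

theory Submission
  imports Defs
begin

definition good :: "'a set set \<Rightarrow> nat \<Rightarrow> 'a list \<Rightarrow> bool" where
  "good E k xs \<longleftrightarrow> (\<forall>i < length xs. deg_in E (set (drop i xs)) (xs ! i) \<le> k)"

lemma good_Nil[simp]: "good E k []"
  by (simp add: good_def)

lemma good_Cons: "good E k (x # xs) \<longleftrightarrow> deg_in E (set (x # xs)) x \<le> k \<and> good E k xs"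
proof
  assume a: "good E k (x # xs)"
  have "deg_in E (set (x # xs)) x \<le> k" using a[unfolded good_def, rule_format, of 0] by simp
  moreover have "good E k xs" unfolding good_def
  proof (intro allI impI)
    fix i assume "i < length xs"
    then show "deg_in E (set (drop i xs)) (xs ! i) \<le> k"
      using a[unfolded good_def, rule_format, of "Suc i"] by simp
  qed
  ultimately show "deg_in E (set (x # xs)) x \<le> k \<and> good E k xs" by blast
next
  assume a: "deg_in E (set (x # xs)) x \<le> k \<and> good E k xs"
  show "good E k (x # xs)" unfolding good_def
  proof (intro allI impI)
    fix i assume "i < length (x # xs)"
    then show "deg_in E (set (drop i (x # xs))) ((x # xs) ! i) \<le> k"
      using a by (cases i) (auto simp: good_def)
  qed
qed

lemma good_mono: "good E k xs \<Longrightarrow> k \<le> k' \<Longrightarrow> good E k' xs"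
  unfolding good_def by force

lemma good_append_bounded:
  assumes "\<forall>x\<in>set xs. \<forall>W. deg_in E W x \<le> k" and "good E k ys"
  shows "good E k (xs @ ys)"
  using assms by (induction xs) (auto simp: good_Cons)

lemma deg_in_union_noedge:
  assumes "\<forall>y\<in>B. {y, x} \<notin> E"
  shows "deg_in E (A \<union> B) x = deg_in E A x"
proof -
  have "{u \<in> A \<union> B. {u, x} \<in> E} = {u \<in> A. {u, x} \<in> E}" using assms by auto
  then show ?thesis by (simp add: deg_in_def)
qed

lemma good_append_sep:
  assumes "good E k xs" and "good E k ys" and "\<forall>x\<in>set xs. \<forall>y\<in>set ys. {y, x} \<notin> E"
  shows "good E k (xs @ ys)"
  using assms
proof (induction xs)
  case Nil then show ?case by simp
next
  case (Cons a xs)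
  have "deg_in E (set (a # xs @ ys)) a = deg_in E (set (a # xs) \<union> set ys) a" by simp
  also have "\<dots> = deg_in E (set (a # xs)) a"
    using Cons.prems(3) by (intro deg_in_union_noedge) auto
  finally show ?case using Cons by (auto simp: good_Cons)
qed

lemma S_sum_adj_sym: "S_sum_adj VG EG EH x y \<Longrightarrow> S_sum_adj VG EG EH y x"
  unfolding S_sum_adj_def by (metis insert_commute)

lemma S_sum_edges_iff:
  "{x, y} \<in> S_sum_edges VG EG VH EH \<longleftrightarrow>
     x \<in> S_sum_vertices VG EG VH \<and> y \<in> S_sum_vertices VG EG VH \<and> S_sum_adj VG EG EH x y"
proof
  assume "{x, y} \<in> S_sum_edges VG EG VH EH"
  then obtain a b where ab: "{x, y} = {a, b}" "a \<in> S_sum_vertices VG EG VH"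
    "b \<in> S_sum_vertices VG EG VH" "S_sum_adj VG EG EH a b"
    unfolding S_sum_edges_def by blast
  from ab(1) have "(x = a \<and> y = b) \<or> (x = b \<and> y = a)" by (simp add: doubleton_eq_iff)
  then show "x \<in> S_sum_vertices VG EG VH \<and> y \<in> S_sum_vertices VG EG VH \<and> S_sum_adj VG EG EH x y"
    using ab S_sum_adj_sym by metis
next
  assume "x \<in> S_sum_vertices VG EG VH \<and> y \<in> S_sum_vertices VG EG VH \<and> S_sum_adj VG EG EH x y"
  then show "{x, y} \<in> S_sum_edges VG EG VH EH" unfolding S_sum_edges_def by blast
qed

lemma subdiv_edges_iff:
  "{a, b} \<in> subdiv_edges E \<longleftrightarrow> (\<exists>v e. e \<in> E \<and> v \<in> e \<and> ((a = Inl v \<and> b = Inr e) \<or> (a = Inr e \<and> b = Inl v)))"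
  unfolding subdiv_edges_def by (auto simp: doubleton_eq_iff)

lemma subdiv_edges_single[simp]: "{a} \<notin> subdiv_edges E"
  unfolding subdiv_edges_def by (auto simp: doubleton_eq_iff)

theorem theorem1:
  fixes VG :: "'a set" and EG :: "'a set set" and VH :: "'b set" and EH :: "'b set set"
    and l :: nat
  assumes "l \<ge> 1"
    and "simple_graph VG EG"
    and "simple_graph VH EH"
    and "degenerate VH EH l"
  shows "(l \<in> {1, 2} \<longrightarrow> degenerate (S_sum_vertices VG EG VH) (S_sum_edges VG EG VH EH) 2)
       \<and> (l \<ge> 3 \<longrightarrow> degenerate (S_sum_vertices VG EG VH) (S_sum_edges VG EG VH EH) l)"
proof -
  let ?V = "S_sum_vertices VG EG VH"
  let ?E = "S_sum_edges VG EG VH EH"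
  define k where "k = max 2 l"
  obtain hs where hs: "distinct hs" "set hs = VH" "good EH l hs"
    using assms(4) unfolding degenerate_def good_def by blast
  have finG: "finite VG" using assms(2) by (simp add: simple_graph_def)
  have EGsub: "EG \<subseteq> Pow VG" using assms(2) by (auto simp: simple_graph_def)
  hence finE: "finite EG" using finG by (meson finite_Pow_iff finite_subset)
  obtain vs where vs: "distinct vs" "set vs = VG" using finG finite_distinct_list by blast
  obtain es where es: "distinct es" "set es = EG" using finE finite_distinct_list by blast
  define blk where "blk v = map (\<lambda>h. (Inl v :: 'a + 'a set, h)) hs" for v
  define R where "R = map (\<lambda>(e, h). (Inr e :: 'a + 'a set, h)) (List.product es hs)"
  define L where "L = concat (map blk vs)"
  have setR: "set R = Inr ` EG \<times> VH" using es hs unfolding R_def by auto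
  have setL: "set L = Inl ` VG \<times> VH" using vs hs unfolding L_def blk_def by auto
  have distR: "distinct R" unfolding R_def using es hs
    by (auto simp: distinct_map inj_on_def distinct_product)
  have Leq: "L = map (\<lambda>(v, h). (Inl v :: 'a + 'a set, h)) (List.product vs hs)"
    unfolding L_def blk_def by (induction vs) auto
  have distL: "distinct L" unfolding Leq using vs hs
    by (auto simp: distinct_map inj_on_def distinct_product)
  have dist: "distinct (R @ L)" using distR distL setR setL by auto
  have setRL: "set (R @ L) = ?V" using setR setL
    by (auto simp: S_sum_vertices_def subdiv_vertices_def)
  \<comment> \<open>Inr vertices have degree at most 2\<close>
  have bndR: "\<forall>x\<in>set R. \<forall>W. deg_in ?E W x \<le> k"
  proof (intro ballI allI)
    fix x W assume "x \<in> set R"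
    then obtain e h where x: "x = (Inr e, h)" "e \<in> EG" using setR by auto
    then obtain a b where ab: "e = {a, b}" using assms(2) by (auto simp: simple_graph_def)
    have "{u \<in> W. {u, x} \<in> ?E} \<subseteq> (\<lambda>v. (Inl v, h)) ` e"
    proof
      fix u assume "u \<in> {u \<in> W. {u, x} \<in> ?E}"
      then have "S_sum_adj VG EG EH u x" by (simp add: S_sum_edges_iff)
      then show "u \<in> (\<lambda>v. (Inl v, h)) ` e"
        unfolding S_sum_adj_def using x by (cases u) (auto simp: subdiv_edges_iff)
    qed
    hence "deg_in ?E W x \<le> card ((\<lambda>v. (Inl v :: 'a + 'a set, h)) ` e)"
      unfolding deg_in_def using ab by (intro card_mono) auto
    also have "\<dots> \<le> card e" using ab by (intro card_image_le) auto
    also have "\<dots> \<le> 2" using ab by (simp add: card_insert_le_m1)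
    finally show "deg_in ?E W x \<le> k" unfolding k_def by simp
  qed
  have blk_good: "good ?E l (map (\<lambda>h. (Inl v :: 'a + 'a set, h)) zs)" if "good EH l zs" for v zs
    using that
  proof (induction zs)
    case Nil then show ?case by simp
  next
    case (Cons z zs)
    let ?f = "\<lambda>h. (Inl v :: 'a + 'a set, h)"
    have "{u \<in> set (map ?f (z # zs)). {u, ?f z} \<in> ?E} \<subseteq> ?f ` {h' \<in> set (z # zs). {h', z} \<in> EH}"
    proof
      fix u assume "u \<in> {u \<in> set (map ?f (z # zs)). {u, ?f z} \<in> ?E}"
      then obtain h' where u: "u = ?f h'" "h' \<in> set (z # zs)" "S_sum_adj VG EG EH (?f h') (?f z)"
        by (auto simp: S_sum_edges_iff)
      then have "{h', z} \<in> EH" unfolding S_sum_adj_def by (auto simp: subdiv_edges_iff)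
      then show "u \<in> ?f ` {h' \<in> set (z # zs). {h', z} \<in> EH}" using u by auto
    qed
    hence "deg_in ?E (set (map ?f (z # zs))) (?f z) \<le> card (?f ` {h' \<in> set (z # zs). {h', z} \<in> EH})"
      unfolding deg_in_def by (intro card_mono) auto
    also have "\<dots> \<le> deg_in EH (set (z # zs)) z" unfolding deg_in_def by (rule card_image_le) auto
    also have "\<dots> \<le> l" using Cons.prems by (simp add: good_Cons)
    finally show ?case using Cons by (simp add: good_Cons)
  qed
  have goodL: "good ?E l (concat (map blk ws))" if "distinct ws" for ws
    using that
  proof (induction ws)
    case Nil then show ?case by simp
  next
    case (Cons w ws)
    have "good ?E l (blk w @ concat (map blk ws))"
    proof (rule good_append_sep)
      show "good ?E l (blk w)" unfolding blk_def using blk_good hs(3) by blast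
      show "good ?E l (concat (map blk ws))" using Cons by simp
      show "\<forall>x\<in>set (blk w). \<forall>y\<in>set (concat (map blk ws)). {y, x} \<notin> ?E"
        using Cons.prems unfolding blk_def
        by (auto simp: S_sum_edges_iff S_sum_adj_def subdiv_edges_iff)
    qed
    then show ?case by simp
  qed
  have "good ?E k (R @ L)"
    using good_append_bounded[OF bndR good_mono[OF goodL[OF vs(1)], of k]]
    unfolding L_def k_def by simp
  hence deg: "degenerate ?V ?E k" using dist setRL unfolding degenerate_def good_def by blast
  show ?thesis using deg unfolding k_def by (auto simp: max_def)
qed

end
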